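(* Let $\mathbb{K}\in\{\mathbb{R},\mathbb{C}\}$ and let $\mathcal{E}$ be a class of Banach spaces over $\mathbb{K}$ closed under isometric isomorphisms. Let $I$ be an index set and $E$ a subspace of $\mathbb{R}^I$ containing all $e_i$, endowed with a complete absolute normalised norm such that $\operatorname{span}\{e_i:i\in I\}$ is dense in $E$. Let $(X_i)_{i\in I}$ be a family of Banach spaces over $\mathbb{K}$ such that $\big[\bigoplus_{i\in J}X_i\big]_E\in\mathcal{E}$ for every nonempty finite subset $J\subseteq I$. If there is a test family for $\mathcal{E}$ in $\big[\bigoplus_{i\in I}X_i\big]_E$, then $\big[\bigoplus_{i\in I}X_i\big]_E\in\mathcal{E}$.
   Context: $e_i$ is the characteristic function of $\{i\}$. A norm on $E\subseteq\mathbb{R}^I$ is absolute if whenever $(a_i)\in E$, $(b_i)\in\mathbb{R}^I$ and $|a_i|=|b_i|$ for all $i$, then $(b_i)\in E$ and $\|(a_i)\|_E=\|(b_i)\|_E$; normalised if $\|e_i\|_E=1$ for all $i$. $\big[\bigoplus_{i\in I}X_i\big]_E=\{(x_i)\in\prod X_i:(\|x_i\|)_i\in E\}$ with norm $\|(x_i)\|=\|(\|x_i\|)_i\|_E$. $\big[\bigoplus_{i\in J}X_i\big]_E$ denotes the same sum where all summands with index in $I\setminus J$ are replaced by $\{0\}$. Notation: for a Banach space $Y$, $Y^*$ is its dual, $B_Y$ its closed unit ball, $S_Y$ its unit sphere; $B_Y^{\mathrm{fin}}$, $S_Y^{\mathrm{fin}}$ denote the sets of all finite sequences in $B_Y$,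 $S_Y$, and $B_Y^n$ the sequences of length $n$. $\|(x_1,\dots,x_n)\|_\infty=\max_i\|x_i\|$. $\mathcal{U}(Z)$ is the set of all closed subspaces $U\ne\{0\}$ of $Z$ (including $Z$); $\mathbf{x}^*|_U$ denotes componentwise restriction. Test family for $\mathcal{E}$ in $Z$: real-valued functions $F_{\varepsilon,U}$ on $B_U^{\mathrm{fin}}\times B_{U^*}^{\mathrm{fin}}\times B_U^{\mathrm{fin}}\times B_{U^*}^{\mathrm{fin}}$ ($U\in\mathcal{U}(Z)$, $\varepsilon>0$) with: (i) $U\in\mathcal{E}$ iff for every $\varepsilon>0$, $\mathbf{x}\in S_U^{\mathrm{fin}}$, $\mathbf{x}^*\in S_{U^*}^{\mathrm{fin}}$ there exist $\mathbf{y}\in S_U^{\mathrm{fin}}$, $\mathbf{y}^*\in S_{U^*}^{\mathrm{fin}}$ with $F_{\varepsilon,U}(\mathbf{x},\mathbf{x}^*,\mathbf{y},\mathbf{y}^* )\le\varepsilon$; (ii) $F_{\varepsilon_1,U}\ge F_{\varepsilon_2,U}$ for $0<\varepsilon_1<\varepsilon_2$; (iii) there is $c>0$ with $F_{\varepsilon,Z}(\mathbf{x},\mathbf{x}^*,\mathbf{y},\mathbf{y}^* )\le cF_{\varepsilon,U}(\mathbf{x},\mathbf{x}^*|_U,\mathbf{y},\mathbf{y}^*|_U)$ for all $U,\varepsilon$, $\mathbf{x},\mathbf{y}\in B_U^{\mathrm{fin}}$, $\mathbf{x}^*,\mathbf{y}^*\in B_{Z^*}^{\mathrm{fin}}$;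 (iv) for every $\varepsilon,\tau>0$, $\mathbf{x}^*\in B_{Z^*}^{\mathrm{fin}}$, $n$, $\mathbf{x}\in B_Z^n$ there is $\delta>0$ with $|F_{\varepsilon,Z}(\mathbf{x},\mathbf{x}^*,\mathbf{y},\mathbf{y}^* )-F_{\varepsilon,Z}(\mathbf{z},\mathbf{x}^*,\mathbf{y},\mathbf{y}^* )|\le\tau$ for all $\mathbf{y}\in B_Z^{\mathrm{fin}}$, $\mathbf{y}^*\in B_{Z^*}^{\mathrm{fin}}$, $\mathbf{z}\in B_Z^n$ with $\|\mathbf{x}-\mathbf{z}\|_\infty\le\delta$; (v) for every $\varepsilon>0$, $n,m$, $\eta>0$ there is $\theta>0$ such that for all $U\in\mathcal{U}(Z)$, $|F_{\varepsilon,U}(\mathbf{x},\mathbf{x}^*,\mathbf{y},\mathbf{y}^* )-F_{\varepsilon,U}(\mathbf{x},\mathbf{z}^*,\mathbf{y},\mathbf{y}^* )|\le\eta$ for all $\mathbf{x}\in B_U^n$, $\mathbf{y}\in B_U^{\mathrm{fin}}$, $\mathbf{y}^*\in B_{U^*}^{\mathrm{fin}}$, $\mathbf{x}^*,\mathbf{z}^*\in B_{U^*}^m$ with $\|\mathbf{x}^*-\mathbf{z}^*\|_\infty\le\theta$. *)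

theory Defs
  imports "HOL-Analysis.Analysis"
begin

(* A complex Banach space is represented as a real Banach space 'a together *)
(* with a complex scalar multiplication extending scaleR.                  *)

definition complex_structure :: "(complex \<Rightarrow> 'a::real_normed_vector \<Rightarrow> 'a) \<Rightarrow> bool" where
  "complex_structure sc \<longleftrightarrow>
     (\<forall>r x. sc (complex_of_real r) x = r *\<^sub>R x) \<and>
     (\<forall>a b x. sc (a * b) x = sc a (sc b x)) \<and>
     (\<forall>a b x. sc (a + b) x = sc a x + sc b x) \<and>
     (\<forall>a x y. sc a (x + y) = sc a x + sc a y) \<and>
     (\<forall>a x. norm (sc a x) = cmod a * norm x)"

(* The sequence space E \<subseteq> R^I (here I = UNIV :: 'i set)                *)

definition unitvec :: "'i \<Rightarrow> 'i \<Rightarrow> real" where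
  "unitvec i = (\<lambda>j. if j = i then 1 else 0)"

definition abs_norm_seq_space :: "('i \<Rightarrow> real) set \<Rightarrow> (('i \<Rightarrow> real) \<Rightarrow> real) \<Rightarrow> bool" where
  "abs_norm_seq_space E nE \<longleftrightarrow>
     \<comment> \<open>E is a linear subspace of R^I containing all e_i\<close>
     (\<lambda>i. 0) \<in> E \<and>
     (\<forall>a\<in>E. \<forall>b\<in>E. (\<lambda>i. a i + b i) \<in> E) \<and>
     (\<forall>a\<in>E. \<forall>c. (\<lambda>i. c * a i) \<in> E) \<and>
     (\<forall>i. unitvec i \<in> E) \<and>
     \<comment> \<open>nE is a norm on E\<close>
     (\<forall>a\<in>E. nE a = 0 \<longleftrightarrow> a = (\<lambda>i. 0)) \<and>
     (\<forall>a\<in>E. \<forall>b\<in>E. nE (\<lambda>i. a i + b i) \<le> nE a + nE b) \<and>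
     (\<forall>a\<in>E. \<forall>c. nE (\<lambda>i. c * a i) = \<bar>c\<bar> * nE a) \<and>
     \<comment> \<open>complete\<close>
     (\<forall>s. (\<forall>n. s n \<in> E) \<and>
          (\<forall>\<epsilon>>0. \<exists>M. \<forall>m\<ge>M. \<forall>n\<ge>M. nE (\<lambda>i. s m i - s n i) < \<epsilon>)
          \<longrightarrow> (\<exists>a\<in>E. (\<lambda>n. nE (\<lambda>i. s n i - a i)) \<longlonglongrightarrow> 0)) \<and>
     \<comment> \<open>absolute\<close>
     (\<forall>a\<in>E. \<forall>b. (\<forall>i. \<bar>a i\<bar> = \<bar>b i\<bar>) \<longrightarrow> b \<in> E \<and> nE b = nE a) \<and>
     \<comment> \<open>normalised\<close>
     (\<forall>i. nE (unitvec i) = 1) \<and>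
     \<comment> \<open>span of the e_i is dense in E\<close>
     (\<forall>a\<in>E. \<forall>\<epsilon>>0. \<exists>J c. finite J \<and>
          nE (\<lambda>j. a j - (\<Sum>i\<in>J. c i * unitvec i j)) < \<epsilon>)"

definition esum :: "('i \<Rightarrow> 'a::real_normed_vector set) \<Rightarrow> ('i \<Rightarrow> real) set \<Rightarrow> ('i \<Rightarrow> 'a) set" where
  "esum X E = {x. (\<forall>i. x i \<in> X i) \<and> (\<lambda>i. norm (x i)) \<in> E}"

definition esum_norm :: "(('i \<Rightarrow> real) \<Rightarrow> real) \<Rightarrow> ('i \<Rightarrow> 'a::real_normed_vector) \<Rightarrow> real" where
  "esum_norm nE x = nE (\<lambda>i. norm (x i))"

definition esum_part :: "('i \<Rightarrow> 'a::real_normed_vector set) \<Rightarrow> ('i \<Rightarrow> real) set \<Rightarrow> 'i set \<Rightarrow> ('i \<Rightarrow> 'a) set" where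
  "esum_part X E J = {x \<in> esum X E. \<forall>i. i \<notin> J \<longrightarrow> x i = 0}"

definition vsc :: "('k \<Rightarrow> 'a \<Rightarrow> 'a) \<Rightarrow> 'k \<Rightarrow> ('i \<Rightarrow> 'a) \<Rightarrow> ('i \<Rightarrow> 'a)" where
  "vsc sc c x = (\<lambda>i. sc c (x i))"

definition lin_subspace :: "('k \<Rightarrow> 'a::real_normed_vector \<Rightarrow> 'a) \<Rightarrow> ('i \<Rightarrow> 'a) set \<Rightarrow> ('i \<Rightarrow> 'a) set \<Rightarrow> bool" where
  "lin_subspace sc V U \<longleftrightarrow> U \<subseteq> V \<and> (\<lambda>i. 0) \<in> U \<and>
     (\<forall>x\<in>U. \<forall>y\<in>U. (\<lambda>i. x i + y i) \<in> U) \<and> (\<forall>c. \<forall>x\<in>U. vsc sc c x \<in> U)"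

definition norm_closed :: "(('i \<Rightarrow> 'a::real_normed_vector) \<Rightarrow> real) \<Rightarrow> ('i \<Rightarrow> 'a) set \<Rightarrow> ('i \<Rightarrow> 'a) set \<Rightarrow> bool" where
  "norm_closed N V U \<longleftrightarrow> (\<forall>s v. (\<forall>n. s n \<in> U) \<and> v \<in> V \<and>
       (\<lambda>n. N (\<lambda>i. s n i - v i)) \<longlonglongrightarrow> 0 \<longrightarrow> v \<in> U)"

definition closed_subspaces :: "('k \<Rightarrow> 'a::real_normed_vector \<Rightarrow> 'a) \<Rightarrow> (('i \<Rightarrow> 'a) \<Rightarrow> real) \<Rightarrow> ('i \<Rightarrow> 'a) set \<Rightarrow> ('i \<Rightarrow> 'a) set set" where
  "closed_subspaces sc N V = {U. lin_subspace sc V U \<and> norm_closed N V U}"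

definition nz_subspaces :: "('k \<Rightarrow> 'a::real_normed_vector \<Rightarrow> 'a) \<Rightarrow> (('i \<Rightarrow> 'a) \<Rightarrow> real) \<Rightarrow> ('i \<Rightarrow> 'a) set \<Rightarrow> ('i \<Rightarrow> 'a) set set" where
  "nz_subspaces sc N V = {U \<in> closed_subspaces sc N V. U \<noteq> {(\<lambda>i. 0)}}"

definition isometric :: "('k \<Rightarrow> 'a::real_normed_vector \<Rightarrow> 'a) \<Rightarrow> (('i \<Rightarrow> 'a) \<Rightarrow> real) \<Rightarrow> ('i \<Rightarrow> 'a) set \<Rightarrow> ('i \<Rightarrow> 'a) set \<Rightarrow> bool" where
  "isometric sc N U W \<longleftrightarrow> (\<exists>T. bij_betw T U W \<and>
     (\<forall>x\<in>U. \<forall>y\<in>U. T (\<lambda>i. x i + y i) = (\<lambda>i. T x i + T y i)) \<and>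
     (\<forall>c. \<forall>x\<in>U. T (vsc sc c x) = vsc sc c (T x)) \<and>
     (\<forall>x\<in>U. N (T x) = N x))"

definition iso_closed :: "('k \<Rightarrow> 'a::real_normed_vector \<Rightarrow> 'a) \<Rightarrow> (('i \<Rightarrow> 'a) \<Rightarrow> real) \<Rightarrow> ('i \<Rightarrow> 'a) set \<Rightarrow> (('i \<Rightarrow> 'a) set \<Rightarrow> bool) \<Rightarrow> bool" where
  "iso_closed sc N V Ecl \<longleftrightarrow> (\<forall>U\<in>closed_subspaces sc N V. \<forall>W\<in>closed_subspaces sc N V.
       Ecl U \<and> isometric sc N U W \<longrightarrow> Ecl W)"

definition nball :: "(('i \<Rightarrow> 'a) \<Rightarrow> real) \<Rightarrow> ('i \<Rightarrow> 'a) set \<Rightarrow> ('i \<Rightarrow> 'a) set" where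
  "nball N U = {x \<in> U. N x \<le> 1}"

definition nsphere :: "(('i \<Rightarrow> 'a) \<Rightarrow> real) \<Rightarrow> ('i \<Rightarrow> 'a) set \<Rightarrow> ('i \<Rightarrow> 'a) set" where
  "nsphere N U = {x \<in> U. N x = 1}"

text \<open>Elements of U^*: bounded K-linear functionals on U, normalised to be 0 outside U.\<close>
definition bdd_functional :: "('k::real_normed_field \<Rightarrow> 'a::real_normed_vector \<Rightarrow> 'a) \<Rightarrow> (('i \<Rightarrow> 'a) \<Rightarrow> real) \<Rightarrow> ('i \<Rightarrow> 'a) set \<Rightarrow> (('i \<Rightarrow> 'a) \<Rightarrow> 'k) \<Rightarrow> bool" where
  "bdd_functional sc N U f \<longleftrightarrow>
     (\<forall>x\<in>U. \<forall>y\<in>U. f (\<lambda>i. x i + y i) = f x + f y) \<and>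
     (\<forall>c. \<forall>x\<in>U. f (vsc sc c x) = c * f x) \<and>
     (\<forall>v. v \<notin> U \<longrightarrow> f v = 0) \<and>
     (\<exists>C. \<forall>x\<in>U. norm (f x) \<le> C * N x)"

definition dnorm :: "(('i \<Rightarrow> 'a) \<Rightarrow> real) \<Rightarrow> ('i \<Rightarrow> 'a) set \<Rightarrow> (('i \<Rightarrow> 'a) \<Rightarrow> 'k::real_normed_field) \<Rightarrow> real" where
  "dnorm N U f = (SUP x\<in>nball N U. norm (f x))"

definition dball :: "('k::real_normed_field \<Rightarrow> 'a::real_normed_vector \<Rightarrow> 'a) \<Rightarrow> (('i \<Rightarrow> 'a) \<Rightarrow> real) \<Rightarrow> ('i \<Rightarrow> 'a) set \<Rightarrow> (('i \<Rightarrow> 'a) \<Rightarrow> 'k) set" where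
  "dball sc N U = {f. bdd_functional sc N U f \<and> dnorm N U f \<le> 1}"

definition dsphere :: "('k::real_normed_field \<Rightarrow> 'a::real_normed_vector \<Rightarrow> 'a) \<Rightarrow> (('i \<Rightarrow> 'a) \<Rightarrow> real) \<Rightarrow> ('i \<Rightarrow> 'a) set \<Rightarrow> (('i \<Rightarrow> 'a) \<Rightarrow> 'k) set" where
  "dsphere sc N U = {f. bdd_functional sc N U f \<and> dnorm N U f = 1}"

definition restr :: "('i \<Rightarrow> 'a) set \<Rightarrow> (('i \<Rightarrow> 'a) \<Rightarrow> 'k::zero) \<Rightarrow> (('i \<Rightarrow> 'a) \<Rightarrow> 'k)" where
  "restr U f = (\<lambda>v. if v \<in> U then f v else 0)"

definition lists_n :: "'b set \<Rightarrow> nat \<Rightarrow> 'b list set" where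
  "lists_n A n = {xs \<in> lists A. length xs = n}"

definition test_family ::
  "('k::real_normed_field \<Rightarrow> 'a::real_normed_vector \<Rightarrow> 'a) \<Rightarrow> (('i \<Rightarrow> 'a) \<Rightarrow> real) \<Rightarrow> ('i \<Rightarrow> 'a) set
   \<Rightarrow> (('i \<Rightarrow> 'a) set \<Rightarrow> bool)
   \<Rightarrow> (real \<Rightarrow> ('i \<Rightarrow> 'a) set \<Rightarrow> ('i \<Rightarrow> 'a) list \<Rightarrow> (('i \<Rightarrow> 'a) \<Rightarrow> 'k) list
        \<Rightarrow> ('i \<Rightarrow> 'a) list \<Rightarrow> (('i \<Rightarrow> 'a) \<Rightarrow> 'k) list \<Rightarrow> real) \<Rightarrow> bool" where
  "test_family sc N Z Ecl F \<longleftrightarrow>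
   \<comment> \<open>(i)\<close>
   (\<forall>U\<in>nz_subspaces sc N Z.
      Ecl U \<longleftrightarrow>
      (\<forall>\<epsilon>>0. \<forall>xs\<in>lists (nsphere N U). \<forall>fs\<in>lists (dsphere sc N U).
         \<exists>ys\<in>lists (nsphere N U). \<exists>gs\<in>lists (dsphere sc N U). F \<epsilon> U xs fs ys gs \<le> \<epsilon>)) \<and>
   \<comment> \<open>(ii)\<close>
   (\<forall>U\<in>nz_subspaces sc N Z. \<forall>\<epsilon>1 \<epsilon>2. 0 < \<epsilon>1 \<and> \<epsilon>1 < \<epsilon>2 \<longrightarrow>
      (\<forall>xs\<in>lists (nball N U). \<forall>fs\<in>lists (dball sc N U).
       \<forall>ys\<in>lists (nball N U). \<forall>gs\<in>lists (dball sc N U).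
         F \<epsilon>1 U xs fs ys gs \<ge> F \<epsilon>2 U xs fs ys gs)) \<and>
   \<comment> \<open>(iii)\<close>
   (\<exists>c>0. \<forall>U\<in>nz_subspaces sc N Z. \<forall>\<epsilon>>0.
      \<forall>xs\<in>lists (nball N U). \<forall>ys\<in>lists (nball N U).
      \<forall>fs\<in>lists (dball sc N Z). \<forall>gs\<in>lists (dball sc N Z).
        F \<epsilon> Z xs fs ys gs \<le> c * F \<epsilon> U xs (map (restr U) fs) ys (map (restr U) gs)) \<and>
   \<comment> \<open>(iv)\<close>
   (\<forall>\<epsilon>>0. \<forall>\<tau>>0. \<forall>fs\<in>lists (dball sc N Z). \<forall>n. \<forall>xs\<in>lists_n (nball N Z) n.
      \<exists>\<delta>>0. \<forall>ys\<in>lists (nball N Z). \<forall>gs\<in>lists (dball sc N Z). \<forall>zs\<in>lists_n (nball N Z) n.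
        (\<forall>k<n. N (\<lambda>i. (xs!k) i - (zs!k) i) \<le> \<delta>) \<longrightarrow>
        \<bar>F \<epsilon> Z xs fs ys gs - F \<epsilon> Z zs fs ys gs\<bar> \<le> \<tau>) \<and>
   \<comment> \<open>(v)\<close>
   (\<forall>\<epsilon>>0. \<forall>n m. \<forall>\<eta>>0. \<exists>\<theta>>0. \<forall>U\<in>nz_subspaces sc N Z.
      \<forall>xs\<in>lists_n (nball N U) n. \<forall>ys\<in>lists (nball N U). \<forall>gs\<in>lists (dball sc N U).
      \<forall>fs\<in>lists_n (dball sc N U) m. \<forall>hs\<in>lists_n (dball sc N U) m.
        (\<forall>k<m. dnorm N U (\<lambda>v. (fs!k) v - (hs!k) v) \<le> \<theta>) \<longrightarrow>
        \<bar>F \<epsilon> U xs fs ys gs - F \<epsilon> U xs hs ys gs\<bar> \<le> \<eta>)"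

definition banach_family :: "('k \<Rightarrow> 'a::banach \<Rightarrow> 'a) \<Rightarrow> ('i \<Rightarrow> 'a set) \<Rightarrow> bool" where
  "banach_family sc X \<longleftrightarrow> (\<forall>i. closed (X i) \<and> 0 \<in> X i \<and>
     (\<forall>x\<in>X i. \<forall>y\<in>X i. x + y \<in> X i) \<and> (\<forall>c. \<forall>x\<in>X i. sc c x \<in> X i))"

definition prop34_hyps ::
  "('k::real_normed_field \<Rightarrow> 'a::banach \<Rightarrow> 'a) \<Rightarrow> ('i \<Rightarrow> 'a set) \<Rightarrow> ('i \<Rightarrow> real) set \<Rightarrow> (('i \<Rightarrow> real) \<Rightarrow> real)
   \<Rightarrow> (('i \<Rightarrow> 'a) set \<Rightarrow> bool)
   \<Rightarrow> (real \<Rightarrow> ('i \<Rightarrow> 'a) set \<Rightarrow> ('i \<Rightarrow> 'a) list \<Rightarrow> (('i \<Rightarrow> 'a) \<Rightarrow> 'k) list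
        \<Rightarrow> ('i \<Rightarrow> 'a) list \<Rightarrow> (('i \<Rightarrow> 'a) \<Rightarrow> 'k) list \<Rightarrow> real) \<Rightarrow> bool" where
  "prop34_hyps sc X E nE Ecl F \<longleftrightarrow>
     iso_closed sc (esum_norm nE) (esum X E) Ecl \<and>
     abs_norm_seq_space E nE \<and>
     banach_family sc X \<and>
     (\<forall>J. finite J \<and> J \<noteq> {} \<longrightarrow> Ecl (esum_part X E J)) \<and>
     test_family sc (esum_norm nE) (esum X E) Ecl F"

end

theory Submission
  imports Defs
begin


locale seqsp =
  fixes E :: "('i \<Rightarrow> real) set" and nE :: "('i \<Rightarrow> real) \<Rightarrow> real"
  assumes asp: "abs_norm_seq_space E nE"
begin

lemma E0: "(\<lambda>i. 0) \<in> E" using asp unfolding abs_norm_seq_space_def by blast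
lemma Eadd: "a \<in> E \<Longrightarrow> b \<in> E \<Longrightarrow> (\<lambda>i. a i + b i) \<in> E" using asp unfolding abs_norm_seq_space_def by blast
lemma Esm: "a \<in> E \<Longrightarrow> (\<lambda>i. c * a i) \<in> E" using asp unfolding abs_norm_seq_space_def by blast
lemma Eunit: "unitvec i \<in> E" using asp unfolding abs_norm_seq_space_def by blast
lemma nE0iff: "a \<in> E \<Longrightarrow> nE a = 0 \<longleftrightarrow> a = (\<lambda>i. 0)" using asp unfolding abs_norm_seq_space_def by blast
lemma nEtri: "a \<in> E \<Longrightarrow> b \<in> E \<Longrightarrow> nE (\<lambda>i. a i + b i) \<le> nE a + nE b" using asp unfolding abs_norm_seq_space_def by blast
lemma nEhom: "a \<in> E \<Longrightarrow> nE (\<lambda>i. c * a i) = \<bar>c\<bar> * nE a" using asp unfolding abs_norm_seq_space_def by blast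
lemma Ecomplete: "(\<forall>n. s n \<in> E) \<Longrightarrow>
          (\<forall>\<epsilon>>0. \<exists>M. \<forall>m\<ge>M. \<forall>n\<ge>M. nE (\<lambda>i. s m i - s n i) < \<epsilon>)
          \<Longrightarrow> (\<exists>a\<in>E. (\<lambda>n. nE (\<lambda>i. s n i - a i)) \<longlonglongrightarrow> 0)" using asp unfolding abs_norm_seq_space_def by blast
lemma Eabs: "a \<in> E \<Longrightarrow> (\<forall>i. \<bar>a i\<bar> = \<bar>b i\<bar>) \<Longrightarrow> b \<in> E \<and> nE b = nE a" using asp unfolding abs_norm_seq_space_def by blast
lemma nEunit: "nE (unitvec i) = 1" using asp unfolding abs_norm_seq_space_def by blast
lemma Edense: "a \<in> E \<Longrightarrow> \<epsilon> > 0 \<Longrightarrow> \<exists>J c. finite J \<and>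
          nE (\<lambda>j. a j - (\<Sum>i\<in>J. c i * unitvec i j)) < \<epsilon>" using asp unfolding abs_norm_seq_space_def by blast

lemma Eneg: "a \<in> E \<Longrightarrow> (\<lambda>i. - a i) \<in> E"
  using Esm[of a "-1"] by simp
lemma Ediff: "a \<in> E \<Longrightarrow> b \<in> E \<Longrightarrow> (\<lambda>i. a i - b i) \<in> E"
  using Eadd[OF _ Eneg, of a b] by simp
lemma nEneg: "a \<in> E \<Longrightarrow> nE (\<lambda>i. - a i) = nE a"
  using nEhom[of a "-1"] by simp
lemma nE_nonneg: "a \<in> E \<Longrightarrow> 0 \<le> nE a"
proof -
  assume a: "a \<in> E"
  have "nE (\<lambda>i. a i + - a i) \<le> nE a + nE (\<lambda>i. - a i)" using nEtri[OF a Eneg[OF a]] .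
  moreover have "nE (\<lambda>i. a i + - a i) = 0" using nE0iff[OF E0] by simp
  ultimately show ?thesis using nEneg[OF a] by simp
qed
lemma nEsym: "a \<in> E \<Longrightarrow> b \<in> E \<Longrightarrow> nE (\<lambda>i. a i - b i) = nE (\<lambda>i. b i - a i)"
  using nEneg[OF Ediff, of b a] by simp
lemma nEdifftri: "a \<in> E \<Longrightarrow> b \<in> E \<Longrightarrow> nE (\<lambda>i. a i - b i) \<le> nE a + nE b"
  using nEtri[OF _ Eneg, of a b] nEneg[of b] by simp
lemma nEtri3: "a \<in> E \<Longrightarrow> b \<in> E \<Longrightarrow> c \<in> E \<Longrightarrow>
   nE (\<lambda>i. a i - c i) \<le> nE (\<lambda>i. a i - b i) + nE (\<lambda>i. b i - c i)"
  using nEtri[OF Ediff Ediff, of a b b c] by simp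

lemma finsupp_in: "finite S \<Longrightarrow> {i. a i \<noteq> 0} \<subseteq> S \<Longrightarrow> a \<in> E"
proof (induction S arbitrary: a rule: finite_induct)
  case empty
  then have "a = (\<lambda>i. 0)" by auto
  then show ?case using E0 by simp
next
  case (insert k S)
  have "{i. (a(k:=0)) i \<noteq> 0} \<subseteq> S" using insert.prems by auto
  then have 1: "a(k:=0) \<in> E" using insert.IH by blast
  have "a = (\<lambda>i. (a(k:=0)) i + a k * unitvec k i)" by (auto simp: unitvec_def)
  then show ?case using Eadd[OF 1 Esm[OF Eunit]] by metis
qed

definition flip :: "'i \<Rightarrow> ('i \<Rightarrow> real) \<Rightarrow> ('i \<Rightarrow> real)" where
  "flip k a = a(k := - a k)"

lemma flip: "a \<in> E \<Longrightarrow> flip k a \<in> E \<and> nE (flip k a) = nE a"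
  by (rule Eabs) (auto simp: flip_def)

lemma coord_le: "a \<in> E \<Longrightarrow> \<bar>a k\<bar> \<le> nE a"
proof -
  assume a: "a \<in> E"
  have eq: "(\<lambda>i. a i - flip k a i) = (\<lambda>i. (2 * a k) * unitvec k i)"
    by (auto simp: flip_def unitvec_def)
  have "nE (\<lambda>i. a i - flip k a i) \<le> nE a + nE (flip k a)"
    using nEdifftri[OF a] flip[OF a] by blast
  also have "\<dots> = 2 * nE a" using flip[OF a] by simp
  finally show ?thesis using eq nEhom[OF Eunit, of "2 * a k" k] nEunit by simp
qed

lemma scale1: assumes a: "a \<in> E" and t: "\<bar>t\<bar> \<le> 1"
  shows "a(k := t * a k) \<in> E \<and> nE (a(k := t * a k)) \<le> nE a"
proof -
  have eq: "a(k := t * a k) = (\<lambda>i. ((1+t)/2) * a i + ((1-t)/2) * flip k a i)"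
    by (auto simp: flip_def field_simps)
  have f: "flip k a \<in> E" "nE (flip k a) = nE a" using flip[OF a] by auto
  have "nE (\<lambda>i. ((1+t)/2) * a i + ((1-t)/2) * flip k a i)
     \<le> nE (\<lambda>i. ((1+t)/2) * a i) + nE (\<lambda>i. ((1-t)/2) * flip k a i)"
    using nEtri[OF Esm[OF a] Esm[OF f(1)]] by blast
  also have "\<dots> = \<bar>(1+t)/2\<bar> * nE a + \<bar>(1-t)/2\<bar> * nE a"
    using nEhom[OF a, of "(1+t)/2"] nEhom[OF f(1), of "(1-t)/2"] f(2) by (simp only:)
  also have "\<dots> = nE a"
  proof -
    have "\<bar>(1+t)/2\<bar> = (1+t)/2" "\<bar>(1-t)/2\<bar> = (1-t)/2" using t by auto
    then show ?thesis by (simp add: field_simps)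
  qed
  finally have "nE (\<lambda>i. ((1+t)/2) * a i + ((1-t)/2) * flip k a i) \<le> nE a" .
  moreover have "(\<lambda>i. ((1+t)/2) * a i + ((1-t)/2) * flip k a i) \<in> E"
    by (rule Eadd[OF Esm[OF a] Esm[OF f(1)]])
  ultimately show ?thesis unfolding eq by blast
qed

lemma mono_fin: "finite D \<Longrightarrow> a \<in> E \<Longrightarrow> \<forall>i. \<bar>b i\<bar> \<le> \<bar>a i\<bar> \<Longrightarrow> \<forall>i. i \<notin> D \<longrightarrow> b i = a i
   \<Longrightarrow> b \<in> E \<and> nE b \<le> nE a"
proof (induction D arbitrary: b rule: finite_induct)
  case empty
  then have "b = a" by auto
  then show ?case using empty by simp
next
  case (insert k D)
  define b' where "b' = b(k := a k)"
  have p1: "\<forall>i. \<bar>b' i\<bar> \<le> \<bar>a i\<bar>" using insert.prems by (auto simp: b'_def)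
  have p2: "\<forall>i. i \<notin> D \<longrightarrow> b' i = a i" using insert.prems by (auto simp: b'_def)
  have "b' \<in> E \<and> nE b' \<le> nE a"
    using insert.IH[OF insert.prems(1) p1 p2] .
  show ?case
  proof (cases "a k = 0")
    case True
    have "\<bar>b k\<bar> \<le> 0" using insert.prems(2) True by (metis abs_zero)
    then have "b k = a k" using True by simp
    then have "b = b'" unfolding b'_def by (metis fun_upd_triv)
    then show ?thesis using \<open>b' \<in> E \<and> nE b' \<le> nE a\<close> by simp
  next
    case False
    define t where "t = b k / a k"
    have t: "\<bar>t\<bar> \<le> 1" using insert.prems False by (simp add: t_def abs_divide)
    have "b = b'(k := t * b' k)"
    proof
      fix i show "b i = (b'(k := t * b' k)) i" using False by (simp add: b'_def t_def)
    qed
    then show ?thesis using scale1[of b' t k] t \<open>b' \<in> E \<and> nE b' \<le> nE a\<close>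
      by (metis order_trans)
  qed
qed

lemma tail: assumes a: "a \<in> E" and e: "\<epsilon> > 0"
  shows "\<exists>J0. finite J0 \<and> (\<forall>J. finite J \<and> J0 \<subseteq> J \<longrightarrow>
     (\<lambda>i. if i \<in> J then 0 else a i) \<in> E \<and> nE (\<lambda>i. if i \<in> J then 0 else a i) < \<epsilon>)"
proof -
  obtain J0 c where J0: "finite J0" and d: "nE (\<lambda>j. a j - (\<Sum>i\<in>J0. c i * unitvec i j)) < \<epsilon>"
    using Edense[OF a e] by blast
  define s where "s = (\<lambda>j. (\<Sum>i\<in>J0. c i * unitvec i j))"
  have s0: "j \<notin> J0 \<Longrightarrow> s j = 0" for j unfolding s_def unitvec_def
    by (rule sum.neutral) auto
  have sE: "s \<in> E" using finsupp_in[OF J0, of s] s0 by auto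
  have dE: "(\<lambda>j. a j - s j) \<in> E" using Ediff[OF a sE] .
  show ?thesis
  proof (intro exI conjI allI impI)
    show "finite J0" by fact
    fix J assume J: "finite J \<and> J0 \<subseteq> J"
    have "(\<lambda>i. if i \<in> J then 0 else a i) \<in> E \<and> nE (\<lambda>i. if i \<in> J then 0 else a i) \<le> nE (\<lambda>j. a j - s j)"
    proof (rule mono_fin[of J])
      show "finite J" using J by simp
      show "(\<lambda>j. a j - s j) \<in> E" by fact
      show "\<forall>i. \<bar>if i \<in> J then 0 else a i\<bar> \<le> \<bar>a i - s i\<bar>"
      proof
        fix i show "\<bar>if i \<in> J then 0 else a i\<bar> \<le> \<bar>a i - s i\<bar>"
        proof (cases "i \<in> J")
          case False
          then have "i \<notin> J0" using J by blast
          then show ?thesis using s0[of i] False by simp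
        qed simp
      qed
      show "\<forall>i. i \<notin> J \<longrightarrow> (if i \<in> J then 0 else a i) = a i - s i"
        using J s0 by auto
    qed
    then show "(\<lambda>i. if i \<in> J then 0 else a i) \<in> E" "nE (\<lambda>i. if i \<in> J then 0 else a i) < \<epsilon>"
      using d unfolding s_def by auto
  qed
qed

lemma solid: assumes a: "a \<in> E" and dom: "\<forall>i. \<bar>b i\<bar> \<le> \<bar>a i\<bar>"
  shows "b \<in> E \<and> nE b \<le> nE a"
proof -
  have "\<forall>n. \<exists>J0. finite J0 \<and> (\<forall>J. finite J \<and> J0 \<subseteq> J \<longrightarrow>
     (\<lambda>i. if i \<in> J then 0 else a i) \<in> E \<and> nE (\<lambda>i. if i \<in> J then 0 else a i) < 1 / real (Suc n))"
    using tail[OF a] by simp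
  then obtain J0 where J0: "\<And>n. finite (J0 n)" "\<And>n J. finite J \<Longrightarrow> J0 n \<subseteq> J \<Longrightarrow>
     (\<lambda>i. if i \<in> J then 0 else a i) \<in> E \<and> nE (\<lambda>i. if i \<in> J then 0 else a i) < 1 / real (Suc n)"
    by metis
  define K where "K n = (\<Union>m\<le>n. J0 m)" for n
  have Kfin: "finite (K n)" for n unfolding K_def using J0(1) by auto
  have KJ: "J0 n \<subseteq> K n" for n unfolding K_def by auto
  have Kmono: "n \<le> m \<Longrightarrow> K n \<subseteq> K m" for n m unfolding K_def by (auto intro: le_trans)
  define tl where "tl n = (\<lambda>i. if i \<in> K n then 0 else a i)" for n
  have tlE: "tl n \<in> E" and tln: "nE (tl n) < 1 / real (Suc n)" for n
    using J0(2)[OF Kfin KJ, of n] unfolding tl_def by auto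
  define bn where "bn n = (\<lambda>i. if i \<in> K n then b i else 0)" for n
  have bnE: "bn n \<in> E" for n by (rule finsupp_in[OF Kfin[of n]]) (auto simp: bn_def)
  have step: "nE (\<lambda>i. bn m i - bn n i) < 2 / real (Suc n)" if nm: "n \<le> m" for n m
  proof -
    define w where "w = (\<lambda>i. if i \<in> K m then (if i \<in> K n then 0 else b i) else a i)"
    have w: "w \<in> E \<and> nE w \<le> nE (tl n)"
    proof (rule mono_fin[OF Kfin[of m] tlE])
      show "\<forall>i. \<bar>w i\<bar> \<le> \<bar>tl n i\<bar>"
      proof
        fix i show "\<bar>w i\<bar> \<le> \<bar>tl n i\<bar>"
          using dom Kmono[OF nm] unfolding w_def tl_def by auto
      qed
      show "\<forall>i. i \<notin> K m \<longrightarrow> w i = tl n i"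
        using Kmono[OF nm] unfolding w_def tl_def by auto
    qed
    have eq: "(\<lambda>i. bn m i - bn n i) = (\<lambda>i. w i - tl m i)"
      using Kmono[OF nm] unfolding w_def tl_def bn_def by (auto simp: fun_eq_iff)
    have "nE (\<lambda>i. w i - tl m i) \<le> nE w + nE (tl m)" using nEdifftri w tlE by blast
    also have "\<dots> < 1 / real (Suc n) + 1 / real (Suc m)" using w tln[of n] tln[of m] by linarith
    also have "\<dots> \<le> 2 / real (Suc n)"
    proof -
      have "1 / real (Suc m) \<le> 1 / real (Suc n)" using nm by (simp add: frac_le)
      then show ?thesis by simp
    qed
    finally show ?thesis using eq by simp
  qed
  have cauchy: "\<forall>\<epsilon>>0. \<exists>M. \<forall>m\<ge>M. \<forall>n\<ge>M. nE (\<lambda>i. bn m i - bn n i) < \<epsilon>"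
  proof (intro allI impI)
    fix \<epsilon> :: real assume e: "\<epsilon> > 0"
    obtain M :: nat where M: "2 / \<epsilon> < real M" using reals_Archimedean2 by blast
    have Me: "2 / real (Suc M) < \<epsilon>"
    proof -
      have "2 < \<epsilon> * real (Suc M)" using M e by (simp add: field_simps)
      then show ?thesis using e by (simp add: field_simps)
    qed
    have "nE (\<lambda>i. bn m i - bn n i) < \<epsilon>" if "m \<ge> M" "n \<ge> M" for m n
    proof (cases "n \<le> m")
      case True
      have "2 / real (Suc n) \<le> 2 / real (Suc M)" using that by (simp add: frac_le)
      then show ?thesis using step[OF True] Me by linarith
    next
      case False
      have "2 / real (Suc m) \<le> 2 / real (Suc M)" using that by (simp add: frac_le)
      then show ?thesis using step[of m n] False Me nEsym[OF bnE bnE, of m n] by simp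
    qed
    then show "\<exists>M. \<forall>m\<ge>M. \<forall>n\<ge>M. nE (\<lambda>i. bn m i - bn n i) < \<epsilon>" by blast
  qed
  obtain c where cE: "c \<in> E" and lim: "(\<lambda>n. nE (\<lambda>i. bn n i - c i)) \<longlonglongrightarrow> 0"
    using Ecomplete[of bn] bnE cauchy by blast
  have small: "\<exists>n. nE (\<lambda>i. bn n i - c i) < e \<and> 1 / real (Suc n) < e" if e: "e > 0" for e
  proof -
    obtain n0 where n0: "\<forall>n\<ge>n0. dist (nE (\<lambda>i. bn n i - c i)) 0 < e"
      using lim e unfolding lim_sequentially by blast
    obtain n1 :: nat where n1: "1 / e < real n1" using reals_Archimedean2 by blast
    define n where "n = max n0 n1"
    have "1 / real (Suc n) < e"
    proof -
      have "1 < e * real n1" using n1 e by (simp add: field_simps)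
      moreover have "real n1 \<le> real (Suc n)" unfolding n_def by simp
      ultimately have "e * real n1 \<le> e * real (Suc n)" using e by simp
      with \<open>1 < e * real n1\<close> have "1 < e * real (Suc n)" by linarith
      then show ?thesis using e by (simp add: field_simps)
    qed
    moreover have "nE (\<lambda>i. bn n i - c i) < e" using n0[rule_format, of n] unfolding n_def by simp
    ultimately show ?thesis by blast
  qed
  have bc: "b = c"
  proof
    fix i
    have "\<bar>b i - c i\<bar> < 2 * e" if e: "e > 0" for e
    proof -
      obtain n where n: "nE (\<lambda>i. bn n i - c i) < e" "1 / real (Suc n) < e" using small[OF e] by blast
      have 1: "\<bar>bn n i - c i\<bar> \<le> nE (\<lambda>i. bn n i - c i)" using coord_le[OF Ediff[OF bnE cE]] by simp
      have 2: "\<bar>b i - bn n i\<bar> < e"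
      proof (cases "i \<in> K n")
        case True then show ?thesis using e by (simp add: bn_def)
      next
        case False
        have "\<bar>tl n i\<bar> \<le> nE (tl n)" using coord_le[OF tlE] .
        then show ?thesis using False dom[rule_format, of i] tln[of n] n(2) by (simp add: bn_def tl_def)
      qed
      show ?thesis using 1 2 n(1) by linarith
    qed
    then have "\<bar>b i - c i\<bar> = 0"
    proof -
      assume h: "\<And>e. e > 0 \<Longrightarrow> \<bar>b i - c i\<bar> < 2 * e"
      show ?thesis
      proof (rule ccontr)
        assume "\<bar>b i - c i\<bar> \<noteq> 0"
        then have "\<bar>b i - c i\<bar> / 2 > 0" by simp
        from h[OF this] show False by simp
      qed
    qed
    then show "b i = c i" by simp
  qed
  have bE: "b \<in> E" using bc cE by simp
  have "nE b \<le> nE a + 2 * e" if e: "e > 0" for e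
  proof -
    obtain n where n: "nE (\<lambda>i. bn n i - c i) < e" "1 / real (Suc n) < e" using small[OF e] by blast
    define v where "v = (\<lambda>i. if i \<in> K n then b i else a i)"
    have v: "v \<in> E \<and> nE v \<le> nE a"
    proof (rule mono_fin[OF Kfin[of n] a])
      show "\<forall>i. \<bar>v i\<bar> \<le> \<bar>a i\<bar>" using dom unfolding v_def by auto
      show "\<forall>i. i \<notin> K n \<longrightarrow> v i = a i" unfolding v_def by auto
    qed
    have "bn n = (\<lambda>i. v i - tl n i)" unfolding bn_def v_def tl_def by auto
    then have bnn: "nE (bn n) \<le> nE v + nE (tl n)" using nEdifftri v tlE by metis
    have "b = (\<lambda>i. bn n i + (b i - bn n i))" by simp
    then have "nE b \<le> nE (bn n) + nE (\<lambda>i. b i - bn n i)"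
      using nEtri[OF bnE Ediff[OF bE bnE]] by metis
    also have "nE (\<lambda>i. b i - bn n i) = nE (\<lambda>i. bn n i - c i)" using nEsym[OF bE bnE] bc by simp
    finally show ?thesis using bnn v tln[of n] n by linarith
  qed
  then have "nE b \<le> nE a"
    using field_le_epsilon[of "nE b" "nE a"]
    by (metis field_sum_of_halves half_gt_zero mult_2)
  with bE show ?thesis by blast
qed

end


locale zsp = seqsp E nE for E :: "('i \<Rightarrow> real) set" and nE :: "('i \<Rightarrow> real) \<Rightarrow> real" +
  fixes sc :: "'k::real_normed_field \<Rightarrow> 'a::banach \<Rightarrow> 'a" and X :: "'i \<Rightarrow> 'a set"
  assumes H1: "\<And>r x. sc (of_real r) x = r *\<^sub>R x"
  and H2: "\<And>c x y. sc c (x + y) = sc c x + sc c y"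
  and H3: "\<And>c x. norm (sc c x) = norm c * norm x"
  and bf: "banach_family sc X"
begin

abbreviation "Z \<equiv> esum X E"
abbreviation N :: "('i \<Rightarrow> 'a) \<Rightarrow> real" where "N \<equiv> esum_norm nE"

lemma X0: "0 \<in> X i" using bf unfolding banach_family_def by blast
lemma Xadd: "x \<in> X i \<Longrightarrow> y \<in> X i \<Longrightarrow> x + y \<in> X i" using bf unfolding banach_family_def by blast
lemma Xsc: "x \<in> X i \<Longrightarrow> sc c x \<in> X i" using bf unfolding banach_family_def by blast
lemma Xneg: "x \<in> X i \<Longrightarrow> - x \<in> X i" using Xsc[of x i "of_real (-1)"] unfolding H1 by simp
lemma Xdiff: "x \<in> X i \<Longrightarrow> y \<in> X i \<Longrightarrow> x - y \<in> X i" using Xadd[OF _ Xneg, of x i y] by simp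
lemma sc0: "sc c 0 = 0" using H3[of c 0] by simp

lemma Zmem: "x \<in> Z \<longleftrightarrow> (\<forall>i. x i \<in> X i) \<and> (\<lambda>i. norm (x i)) \<in> E" by (simp add: esum_def)
lemma Ndef: "N x = nE (\<lambda>i. norm (x i))" by (simp add: esum_norm_def)

lemma Zsolid: "a \<in> E \<Longrightarrow> \<forall>i. y i \<in> X i \<Longrightarrow> \<forall>i. norm (y i) \<le> \<bar>a i\<bar> \<Longrightarrow> y \<in> Z \<and> N y \<le> nE a"
  using solid[of a "\<lambda>i. norm (y i)"] by (simp add: Zmem Ndef)

lemma Zmono: "x \<in> Z \<Longrightarrow> \<forall>i. y i \<in> X i \<Longrightarrow> \<forall>i. norm (y i) \<le> norm (x i) \<Longrightarrow> y \<in> Z \<and> N y \<le> N x"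
  using Zsolid[of "\<lambda>i. norm (x i)" y] by (simp add: Zmem Ndef)

lemma Z0: "(\<lambda>i. 0) \<in> Z" using E0 X0 by (simp add: Zmem)
lemma N0: "N (\<lambda>i. 0) = 0" using nE0iff[OF E0] by (simp add: Ndef)

lemma Zadd: assumes x: "x \<in> Z" and y: "y \<in> Z"
  shows "(\<lambda>i. x i + y i) \<in> Z \<and> N (\<lambda>i. x i + y i) \<le> N x + N y"
proof -
  have a: "(\<lambda>i. norm (x i) + norm (y i)) \<in> E" using Eadd x y by (simp add: Zmem)
  have "(\<lambda>i. x i + y i) \<in> Z \<and> N (\<lambda>i. x i + y i) \<le> nE (\<lambda>i. norm (x i) + norm (y i))"
    by (rule Zsolid[OF a]) (use x y Xadd norm_triangle_ineq in \<open>auto simp: Zmem\<close>)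
  moreover have "nE (\<lambda>i. norm (x i) + norm (y i)) \<le> N x + N y"
    using nEtri x y by (simp add: Zmem Ndef)
  ultimately show ?thesis by linarith
qed

lemma Zsc: assumes x: "x \<in> Z" shows "vsc sc c x \<in> Z \<and> N (vsc sc c x) = norm c * N x"
proof -
  have e: "(\<lambda>i. norm (vsc sc c x i)) = (\<lambda>i. norm c * norm (x i))" by (simp add: vsc_def H3)
  show ?thesis using x Esm[of "\<lambda>i. norm (x i)" "norm c"] nEhom[of "\<lambda>i. norm (x i)" "norm c"] Xsc
    unfolding Zmem Ndef e by (simp add: vsc_def)
qed

lemma Zneg: assumes x: "x \<in> Z" shows "(\<lambda>i. - x i) \<in> Z \<and> N (\<lambda>i. - x i) = N x"
  using x Xneg by (simp add: Zmem Ndef)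

lemma Zdiff: assumes x: "x \<in> Z" and y: "y \<in> Z"
  shows "(\<lambda>i. x i - y i) \<in> Z \<and> N (\<lambda>i. x i - y i) \<le> N x + N y"
  using Zadd[OF x Zneg[OF y, THEN conjunct1]] Zneg[OF y] by simp

lemma Nsym: "N (\<lambda>i. x i - y i) = N (\<lambda>i. y i - x i)"
  by (simp add: Ndef norm_minus_commute)

lemma Ntri3: assumes "x \<in> Z" "y \<in> Z" "z \<in> Z"
  shows "N (\<lambda>i. x i - z i) \<le> N (\<lambda>i. x i - y i) + N (\<lambda>i. y i - z i)"
  using Zadd[OF Zdiff[OF assms(1,2), THEN conjunct1] Zdiff[OF assms(2,3), THEN conjunct1]] by simp

lemma Nnonneg: "x \<in> Z \<Longrightarrow> 0 \<le> N x" using nE_nonneg by (simp add: Zmem Ndef)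
lemma Ncoord: "x \<in> Z \<Longrightarrow> norm (x i) \<le> N x" using coord_le[of "\<lambda>i. norm (x i)" i] by (simp add: Zmem Ndef)
lemma N0iff: "x \<in> Z \<Longrightarrow> N x = 0 \<longleftrightarrow> x = (\<lambda>i. 0)"
proof
  assume "x \<in> Z" "N x = 0"
  then show "x = (\<lambda>i. 0)" using Ncoord[of x] by (metis norm_le_zero_iff ext)
qed (simp add: N0)

definition P :: "'i set \<Rightarrow> ('i \<Rightarrow> 'a) \<Rightarrow> ('i \<Rightarrow> 'a)" where
  "P J x = (\<lambda>i. if i \<in> J then x i else 0)"

abbreviation "ZJ J \<equiv> esum_part X E J"

lemma ZJ_sub: "ZJ J \<subseteq> Z" by (auto simp: esum_part_def)

lemma P_Z: assumes x: "x \<in> Z" shows "P J x \<in> ZJ J \<and> N (P J x) \<le> N x"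
proof -
  have "P J x \<in> Z \<and> N (P J x) \<le> N x"
    by (rule Zmono[OF x]) (use x X0 in \<open>auto simp: P_def Zmem\<close>)
  then show ?thesis by (auto simp: esum_part_def P_def)
qed

lemma P_id: "x \<in> ZJ J \<Longrightarrow> P J x = x" by (auto simp: esum_part_def P_def)

lemma P_add: "P J (\<lambda>i. x i + y i) = (\<lambda>i. P J x i + P J y i)" by (auto simp: P_def)
lemma P_vsc: "P J (vsc sc c x) = vsc sc c (P J x)" by (auto simp: P_def vsc_def sc0)

lemma tailZ: assumes x: "x \<in> Z" and e: "e > 0"
  shows "\<exists>J0. finite J0 \<and> (\<forall>J. finite J \<and> J0 \<subseteq> J \<longrightarrow> N (\<lambda>i. x i - P J x i) < e)"
proof -
  obtain J0 where "finite J0" and J0: "\<forall>J. finite J \<and> J0 \<subseteq> J \<longrightarrow>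
     nE (\<lambda>i. if i \<in> J then 0 else norm (x i)) < e"
    using tail[of "\<lambda>i. norm (x i)" e] x e by (auto simp: Zmem)
  moreover have "(\<lambda>i. norm (x i - P J x i)) = (\<lambda>i. if i \<in> J then 0 else norm (x i))" for J
    by (auto simp: P_def)
  ultimately show ?thesis by (auto simp: Ndef)
qed

lemma lin_ZJ: "lin_subspace sc Z (ZJ J)"
  unfolding lin_subspace_def
proof (intro conjI ballI allI)
  show "ZJ J \<subseteq> Z" by (rule ZJ_sub)
  show "(\<lambda>i. 0) \<in> ZJ J" using Z0 by (simp add: esum_part_def)
  fix x y assume x: "x \<in> ZJ J" and y: "y \<in> ZJ J"
  then show "(\<lambda>i. x i + y i) \<in> ZJ J" using Zadd[of x y] by (auto simp: esum_part_def)
next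
  fix c x assume x: "x \<in> ZJ J"
  then show "vsc sc c x \<in> ZJ J" using Zsc[of x c] by (auto simp: esum_part_def vsc_def sc0)
qed

lemma lin_Z: "lin_subspace sc Z Z"
  unfolding lin_subspace_def using Z0 Zadd Zsc by auto

lemma Z_nz: "Z \<noteq> {(\<lambda>i. 0)} \<Longrightarrow> Z \<in> nz_subspaces sc N Z"
  unfolding nz_subspaces_def closed_subspaces_def norm_closed_def using lin_Z by auto

lemma ZJ_nz: assumes ne: "ZJ J \<noteq> {(\<lambda>i. 0)}" shows "ZJ J \<in> nz_subspaces sc N Z"
proof -
  have "norm_closed N Z (ZJ J)"
    unfolding norm_closed_def
  proof (intro allI impI)
    fix s v assume h: "(\<forall>n. s n \<in> ZJ J) \<and> v \<in> Z \<and> (\<lambda>n. N (\<lambda>i. s n i - v i)) \<longlonglongrightarrow> 0"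
    have "v i = 0" if i: "i \<notin> J" for i
    proof -
      have "norm (v i) \<le> N (\<lambda>i. s n i - v i)" for n
      proof -
        have "s n \<in> Z" "s n i = 0" using h ZJ_sub i by (auto simp: esum_part_def)
        then show ?thesis using Ncoord[OF Zdiff[of "s n" v, THEN conjunct1], of i] h by simp
      qed
      then have "norm (v i) \<le> 0" using h by (intro LIMSEQ_le_const[of _ 0]) auto
      then show ?thesis by simp
    qed
    then show "v \<in> ZJ J" using h by (auto simp: esum_part_def)
  qed
  then show ?thesis using ne lin_ZJ unfolding nz_subspaces_def closed_subspaces_def by auto
qed

end


context zsp begin

lemma lsU: "lin_subspace sc Z U \<Longrightarrow> U \<subseteq> Z" by (simp add: lin_subspace_def)
lemma ls0: "lin_subspace sc Z U \<Longrightarrow> (\<lambda>i. 0) \<in> U" by (simp add: lin_subspace_def)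
lemma lsvsc: "lin_subspace sc Z U \<Longrightarrow> x \<in> U \<Longrightarrow> vsc sc c x \<in> U" by (simp add: lin_subspace_def)
lemma lsadd: "lin_subspace sc Z U \<Longrightarrow> x \<in> U \<Longrightarrow> y \<in> U \<Longrightarrow> (\<lambda>i. x i + y i) \<in> U" by (simp add: lin_subspace_def)

lemma fadd: "bdd_functional sc N U f \<Longrightarrow> x \<in> U \<Longrightarrow> y \<in> U \<Longrightarrow> f (\<lambda>i. x i + y i) = f x + f y"
  by (simp add: bdd_functional_def)
lemma fvsc: "bdd_functional sc N U f \<Longrightarrow> x \<in> U \<Longrightarrow> f (vsc sc c x) = c * f x"
  by (simp add: bdd_functional_def)
lemma fout: "bdd_functional sc N U f \<Longrightarrow> v \<notin> U \<Longrightarrow> f v = 0"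
  by (simp add: bdd_functional_def)

lemma f0: assumes U: "lin_subspace sc Z U" and f: "bdd_functional sc N U f" shows "f (\<lambda>i. 0) = 0"
  using fadd[OF f ls0[OF U] ls0[OF U]] by simp

lemma nball0: assumes "lin_subspace sc Z U" shows "(\<lambda>i. 0) \<in> nball N U"
proof -
  have "N (\<lambda>i. 0) \<le> 1" using N0 by simp
  then show ?thesis using ls0[OF assms] unfolding nball_def by blast
qed

lemma dbdd: assumes U: "lin_subspace sc Z U" and f: "bdd_functional sc N U f"
  shows "bdd_above ((\<lambda>x. norm (f x)) ` nball N U)"
proof -
  obtain C where C: "\<forall>x\<in>U. norm (f x) \<le> C * N x" using f by (auto simp: bdd_functional_def)
  have "norm (f x) \<le> \<bar>C\<bar>" if x: "x \<in> nball N U" for x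
  proof -
    have "x \<in> Z" "N x \<le> 1" using x lsU[OF U] by (auto simp: nball_def)
    then have "C * N x \<le> \<bar>C\<bar> * N x" using Nnonneg[of x] by (intro mult_right_mono) auto
    also have "\<dots> \<le> \<bar>C\<bar>" using \<open>N x \<le> 1\<close> by (intro mult_left_le) auto
    finally have "C * N x \<le> \<bar>C\<bar>" .
    then show ?thesis using C x by (force simp: nball_def)
  qed
  then show ?thesis by (rule bdd_aboveI2)
qed

lemma dupper: assumes U: "lin_subspace sc Z U" and f: "bdd_functional sc N U f" and x: "x \<in> nball N U"
  shows "norm (f x) \<le> dnorm N U f"
  unfolding dnorm_def by (rule cSUP_upper[OF x dbdd[OF U f]])

lemma dleast: "lin_subspace sc Z U \<Longrightarrow> (\<And>x. x \<in> nball N U \<Longrightarrow> norm (f x) \<le> B) \<Longrightarrow> dnorm N U f \<le> B"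
  unfolding dnorm_def by (rule cSUP_least) (use nball0 in auto)

lemma dnonneg: "lin_subspace sc Z U \<Longrightarrow> bdd_functional sc N U f \<Longrightarrow> 0 \<le> dnorm N U f"
  using dupper[OF _ _ nball0] by (metis norm_ge_zero order_trans)

lemma fbound: assumes U: "lin_subspace sc Z U" and f: "bdd_functional sc N U f" and x: "x \<in> U"
  shows "norm (f x) \<le> dnorm N U f * N x"
proof (cases "N x = 0")
  case True
  then have "x = (\<lambda>i. 0)" using N0iff x lsU[OF U] by blast
  then show ?thesis using f0[OF U f] True by simp
next
  case False
  have xZ: "x \<in> Z" using x lsU[OF U] by blast
  have pos: "N x > 0" using False Nnonneg[OF xZ] by simp
  define y where "y = vsc sc (of_real (1 / N x)) x"
  have yU: "y \<in> U" unfolding y_def by (rule lsvsc[OF U x])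
  have "N y = 1" using Zsc[OF xZ, of "of_real (1 / N x)"] pos unfolding y_def by (simp add: norm_divide)
  then have "y \<in> nball N U" using yU by (simp add: nball_def)
  then have "norm (f y) \<le> dnorm N U f" by (rule dupper[OF U f])
  moreover have "norm (f y) = norm (f x) / N x"
    unfolding y_def fvsc[OF f x] using pos by (simp add: norm_mult norm_divide)
  ultimately show ?thesis using pos by (simp add: field_simps)
qed

lemma bf_scale: assumes f: "bdd_functional sc N U f" shows "bdd_functional sc N U (\<lambda>v. a * f v)"
proof -
  obtain C where C: "\<forall>x\<in>U. norm (f x) \<le> C * N x" using f by (auto simp: bdd_functional_def)
  have "\<forall>x\<in>U. norm (a * f x) \<le> (norm a * C) * N x"
    using C by (simp add: norm_mult mult.assoc mult_left_mono)
  then have b: "\<exists>C. \<forall>x\<in>U. norm (a * f x) \<le> C * N x" by blast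
  show ?thesis unfolding bdd_functional_def
  proof (intro conjI)
    show "\<forall>x\<in>U. \<forall>y\<in>U. a * f (\<lambda>i. x i + y i) = a * f x + a * f y"
      using f by (simp add: bdd_functional_def algebra_simps)
    show "\<forall>c. \<forall>x\<in>U. a * f (vsc sc c x) = c * (a * f x)"
      using f by (simp add: bdd_functional_def mult.left_commute)
    show "\<forall>v. v \<notin> U \<longrightarrow> a * f v = 0" using f by (simp add: bdd_functional_def)
  qed (rule b)
qed

lemma dscale: assumes U: "lin_subspace sc Z U" and f: "bdd_functional sc N U f" and t: "t \<ge> 0"
  shows "dnorm N U (\<lambda>v. of_real t * f v) = t * dnorm N U f"
proof (rule antisym)
  show "dnorm N U (\<lambda>v. of_real t * f v) \<le> t * dnorm N U f"
    by (rule dleast[OF U]) (use dupper[OF U f] t in \<open>auto simp: norm_mult intro: mult_left_mono\<close>)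
  show "t * dnorm N U f \<le> dnorm N U (\<lambda>v. of_real t * f v)"
  proof (cases "t = 0")
    case True then show ?thesis using dnonneg[OF U bf_scale[OF f, of 0]] by simp
  next
    case False
    then have tp: "t > 0" using t by simp
    have "dnorm N U f \<le> dnorm N U (\<lambda>v. of_real t * f v) / t"
    proof (rule dleast[OF U])
      fix x assume x: "x \<in> nball N U"
      have "norm (of_real t * f x) \<le> dnorm N U (\<lambda>v. of_real t * f v)"
        using dupper[OF U bf_scale[OF f] x] .
      then show "norm (f x) \<le> dnorm N U (\<lambda>v. of_real t * f v) / t"
        using tp by (simp add: norm_mult field_simps)
    qed
    then show ?thesis using tp by (simp add: field_simps)
  qed
qed

end


context zsp begin

lemma restr_dball: assumes U: "lin_subspace sc Z U" and f: "f \<in> dball sc N Z"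
  shows "restr U f \<in> dball sc N U"
proof -
  have UZ: "U \<subseteq> Z" using lsU[OF U] .
  have fb: "bdd_functional sc N Z f" and f1: "dnorm N Z f \<le> 1" using f by (auto simp: dball_def)
  have bfU: "bdd_functional sc N U (restr U f)"
    unfolding bdd_functional_def
  proof (intro conjI ballI allI impI)
    fix x y assume x: "x \<in> U" and y: "y \<in> U"
    then show "restr U f (\<lambda>i. x i + y i) = restr U f x + restr U f y"
      using lsadd[OF U x y] fadd[OF fb] UZ by (auto simp: restr_def)
  next
    fix c x assume x: "x \<in> U"
    then show "restr U f (vsc sc c x) = c * restr U f x"
      using lsvsc[OF U x] fvsc[OF fb] UZ by (auto simp: restr_def)
  next
    fix v assume "v \<notin> U" then show "restr U f v = 0" by (simp add: restr_def)
  next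
    have "\<forall>x\<in>U. norm (restr U f x) \<le> dnorm N Z f * N x"
      using fbound[OF lin_Z fb] UZ by (auto simp: restr_def)
    then show "\<exists>C. \<forall>x\<in>U. norm (restr U f x) \<le> C * N x" by blast
  qed
  have "dnorm N U (restr U f) \<le> 1"
  proof (rule dleast[OF U])
    fix x assume x: "x \<in> nball N U"
    then have "x \<in> nball N Z" using UZ by (auto simp: nball_def)
    then have "norm (f x) \<le> dnorm N Z f" by (rule dupper[OF lin_Z fb])
    then show "norm (restr U f x) \<le> 1" using x f1 by (auto simp: restr_def nball_def)
  qed
  then show ?thesis using bfU by (simp add: dball_def)
qed

lemma fZbound: "f \<in> dball sc N Z \<Longrightarrow> x \<in> Z \<Longrightarrow> norm (f x) \<le> N x"
proof -
  assume f: "f \<in> dball sc N Z" and x: "x \<in> Z"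
  have fb: "bdd_functional sc N Z f" and f1: "dnorm N Z f \<le> 1" using f by (auto simp: dball_def)
  have "norm (f x) \<le> dnorm N Z f * N x" by (rule fbound[OF lin_Z fb x])
  also have "\<dots> \<le> N x" using f1 Nnonneg[OF x] dnonneg[OF lin_Z fb] by (intro mult_left_le_one_le) auto
  finally show ?thesis .
qed

lemma restr_lower: assumes f: "f \<in> dball sc N Z" and x: "x \<in> nball N Z"
  shows "norm (f x) - N (\<lambda>i. x i - P J x i) \<le> dnorm N (ZJ J) (restr (ZJ J) f)"
proof -
  have xZ: "x \<in> Z" and x1: "N x \<le> 1" using x by (auto simp: nball_def)
  have fb: "bdd_functional sc N Z f" using f by (auto simp: dball_def)
  have Px: "P J x \<in> ZJ J" "N (P J x) \<le> N x" using P_Z[OF xZ] by auto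
  have PxZ: "P J x \<in> Z" using Px ZJ_sub by blast
  have dZ: "(\<lambda>i. x i - P J x i) \<in> Z" using Zdiff[OF xZ PxZ] by blast
  have "x = (\<lambda>i. P J x i + (x i - P J x i))" by simp
  then have "f x = f (P J x) + f (\<lambda>i. x i - P J x i)" using fadd[OF fb PxZ dZ] by metis
  then have "norm (f x) \<le> norm (f (P J x)) + norm (f (\<lambda>i. x i - P J x i))"
    by (metis norm_triangle_ineq)
  moreover have "norm (f (\<lambda>i. x i - P J x i)) \<le> N (\<lambda>i. x i - P J x i)" by (rule fZbound[OF f dZ])
  moreover have "norm (f (P J x)) \<le> dnorm N (ZJ J) (restr (ZJ J) f)"
  proof -
    have "P J x \<in> nball N (ZJ J)" using Px x1 by (auto simp: nball_def)
    from dupper[OF lin_ZJ _ this, of "restr (ZJ J) f"] restr_dball[OF lin_ZJ f] Px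
    show ?thesis by (simp add: dball_def restr_def)
  qed
  ultimately show ?thesis by linarith
qed

definition ext :: "'i set \<Rightarrow> (('i \<Rightarrow> 'a) \<Rightarrow> 'k) \<Rightarrow> (('i \<Rightarrow> 'a) \<Rightarrow> 'k)" where
  "ext J g = (\<lambda>v. if v \<in> Z then g (P J v) else 0)"

lemma ext_props: assumes g: "g \<in> dsphere sc N (ZJ J)"
  shows "ext J g \<in> dsphere sc N Z" and "restr (ZJ J) (ext J g) = g"
proof -
  have gb: "bdd_functional sc N (ZJ J) g" and g1: "dnorm N (ZJ J) g = 1" using g by (auto simp: dsphere_def)
  have PZ: "x \<in> Z \<Longrightarrow> P J x \<in> ZJ J" for x using P_Z by blast
  have bfZ: "bdd_functional sc N Z (ext J g)"
    unfolding bdd_functional_def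
  proof (intro conjI ballI allI impI)
    fix x y assume x: "x \<in> Z" and y: "y \<in> Z"
    then show "ext J g (\<lambda>i. x i + y i) = ext J g x + ext J g y"
      using Zadd[OF x y] fadd[OF gb PZ[OF x] PZ[OF y]] by (simp add: ext_def P_add)
  next
    fix c x assume x: "x \<in> Z"
    then show "ext J g (vsc sc c x) = c * ext J g x"
      using Zsc[OF x] fvsc[OF gb PZ[OF x]] by (simp add: ext_def P_vsc)
  next
    fix v assume "v \<notin> Z" then show "ext J g v = 0" by (simp add: ext_def)
  next
    have "norm (ext J g x) \<le> 1 * N x" if x: "x \<in> Z" for x
    proof -
      have "norm (g (P J x)) \<le> dnorm N (ZJ J) g * N (P J x)" by (rule fbound[OF lin_ZJ gb PZ[OF x]])
      also have "\<dots> \<le> N x" using g1 P_Z[OF x] by simp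
      finally show ?thesis using x by (simp add: ext_def)
    qed
    then show "\<exists>C. \<forall>x\<in>Z. norm (ext J g x) \<le> C * N x" by blast
  qed
  have le: "dnorm N Z (ext J g) \<le> 1"
  proof (rule dleast[OF lin_Z])
    fix x assume x: "x \<in> nball N Z"
    then have "P J x \<in> nball N (ZJ J)" using P_Z[of x J] by (auto simp: nball_def)
    then have "norm (g (P J x)) \<le> 1" using dupper[OF lin_ZJ gb] g1 by metis
    then show "norm (ext J g x) \<le> 1" using x by (simp add: ext_def nball_def)
  qed
  have ge: "1 \<le> dnorm N Z (ext J g)"
  proof -
    have "dnorm N (ZJ J) g \<le> dnorm N Z (ext J g)"
    proof (rule dleast[OF lin_ZJ])
      fix x assume x: "x \<in> nball N (ZJ J)"
      then have xZ: "x \<in> nball N Z" using ZJ_sub by (auto simp: nball_def)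
      have "ext J g x = g x" using x ZJ_sub P_id[of x J] by (auto simp: ext_def nball_def)
      then show "norm (g x) \<le> dnorm N Z (ext J g)" using dupper[OF lin_Z bfZ xZ] by simp
    qed
    then show ?thesis using g1 by simp
  qed
  show "ext J g \<in> dsphere sc N Z" using le ge bfZ by (simp add: dsphere_def)
  show "restr (ZJ J) (ext J g) = g"
  proof
    fix v show "restr (ZJ J) (ext J g) v = g v"
      using ZJ_sub P_id[of v J] fout[OF gb, of v] by (auto simp: restr_def ext_def)
  qed
qed

lemma normalize_fun: assumes f': "f' \<in> dball sc N (ZJ J)" and dpos: "dnorm N (ZJ J) f' > 0"
  shows "(\<lambda>v. of_real (1 / dnorm N (ZJ J) f') * f' v) \<in> dsphere sc N (ZJ J)"
    and "dnorm N (ZJ J) (\<lambda>v. f' v - of_real (1 / dnorm N (ZJ J) f') * f' v) = 1 - dnorm N (ZJ J) f'"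
proof -
  define d where "d = dnorm N (ZJ J) f'"
  have fb: "bdd_functional sc N (ZJ J) f'" and d1: "d \<le> 1" using f' by (auto simp: dball_def d_def)
  have dp: "d > 0" using dpos by (simp add: d_def)
  have "dnorm N (ZJ J) (\<lambda>v. of_real (1 / d) * f' v) = (1/d) * d"
    using dscale[OF lin_ZJ fb, of "1/d"] dp by (simp add: d_def)
  then have dn: "dnorm N (ZJ J) (\<lambda>v. of_real (1 / d) * f' v) = 1" using dp by simp
  have bf: "bdd_functional sc N (ZJ J) (\<lambda>v. of_real (1 / d) * f' v)" by (rule bf_scale[OF fb])
  show "(\<lambda>v. of_real (1 / dnorm N (ZJ J) f') * f' v) \<in> dsphere sc N (ZJ J)"
    unfolding d_def[symmetric] dsphere_def using bf dn by blast
  have eq: "(\<lambda>x. norm (f' x - of_real (1 / d) * f' x)) = (\<lambda>x. norm (of_real (1 / d - 1) * f' x))"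
  proof
    fix x
    have "f' x - of_real (1 / d) * f' x = - (of_real (1 / d - 1) * f' x)" by (simp add: algebra_simps)
    then show "norm (f' x - of_real (1 / d) * f' x) = norm (of_real (1 / d - 1) * f' x)"
      by (metis norm_minus_cancel)
  qed
  have "dnorm N (ZJ J) (\<lambda>v. f' v - of_real (1 / d) * f' v) = dnorm N (ZJ J) (\<lambda>v. of_real (1 / d - 1) * f' v)"
    unfolding dnorm_def using eq by metis
  also have "\<dots> = (1 / d - 1) * d"
  proof -
    have nn: "0 \<le> 1 / d - 1" using dp d1 by (simp add: field_simps)
    have "dnorm N (ZJ J) (\<lambda>v. of_real (1 / d - 1) * f' v) = (1 / d - 1) * dnorm N (ZJ J) f'"
      by (rule dscale[OF lin_ZJ fb nn])
    then show ?thesis by (simp only: d_def)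
  qed
  also have "\<dots> = 1 - d" using dp by (simp add: field_simps)
  finally show "dnorm N (ZJ J) (\<lambda>v. f' v - of_real (1 / dnorm N (ZJ J) f') * f' v) = 1 - dnorm N (ZJ J) f'"
    by (simp add: d_def)
qed

lemma normalize_vec: assumes x: "x \<in> nsphere N Z" and t: "N (\<lambda>i. x i - P J x i) \<le> t" and t1: "t < 1"
  shows "vsc sc (of_real (1 / N (P J x))) (P J x) \<in> nsphere N (ZJ J)"
    and "N (\<lambda>i. x i - vsc sc (of_real (1 / N (P J x))) (P J x) i) \<le> 2 * t"
proof -
  have xZ: "x \<in> Z" and x1: "N x = 1" using x by (auto simp: nsphere_def)
  define p where "p = N (P J x)"
  have Px: "P J x \<in> ZJ J" "p \<le> 1" using P_Z[OF xZ] x1 by (auto simp: p_def)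
  have PxZ: "P J x \<in> Z" using Px ZJ_sub by blast
  have "N x \<le> N (\<lambda>i. x i - P J x i) + N (\<lambda>i. P J x i - 0)"
    using Ntri3[OF xZ PxZ Z0] by simp
  then have pge: "1 - t \<le> p" using x1 t by (simp add: p_def)
  have pp: "p > 0" using pge t1 by simp
  define z where "z = vsc sc (of_real (1 / p)) (P J x)"
  have zJ: "z \<in> ZJ J" unfolding z_def by (rule lsvsc[OF lin_ZJ Px(1)])
  have Nz: "N z = 1" using Zsc[OF PxZ, of "of_real (1/p)"] pp by (simp add: z_def p_def norm_divide)
  show "vsc sc (of_real (1 / N (P J x))) (P J x) \<in> nsphere N (ZJ J)"
    using zJ Nz by (simp add: nsphere_def z_def p_def)
  have eq: "(\<lambda>i. P J x i - z i) = vsc sc (of_real (1 - 1/p)) (P J x)"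
    unfolding z_def vsc_def H1 by (auto simp: algebra_simps)
  have "N (\<lambda>i. P J x i - z i) = norm (of_real (1 - 1/p) :: 'k) * p"
    unfolding eq using Zsc[OF PxZ] by (simp add: p_def)
  also have "\<dots> = (1/p - 1) * p"
  proof -
    have "1/p \<ge> 1" using pp Px(2) by (simp add: field_simps)
    moreover have "norm (of_real (1 - 1/p) :: 'k) = \<bar>1 - 1/p\<bar>" by (rule norm_of_real)
    ultimately show ?thesis by simp
  qed
  also have "\<dots> = 1 - p" using pp by (simp add: field_simps)
  finally have "N (\<lambda>i. P J x i - z i) \<le> t" using pge by simp
  moreover have "N (\<lambda>i. x i - z i) \<le> N (\<lambda>i. x i - P J x i) + N (\<lambda>i. P J x i - z i)"
    using Ntri3[OF xZ PxZ] zJ ZJ_sub by blast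
  ultimately show "N (\<lambda>i. x i - vsc sc (of_real (1 / N (P J x))) (P J x) i) \<le> 2 * t"
    using t by (simp add: z_def p_def)
qed

end


context zsp begin

lemma choose_J: assumes W: "finite W" "W \<subseteq> Z" and s: "s > 0"
  shows "\<exists>J. finite J \<and> i0 \<in> J \<and> (\<forall>w\<in>W. N (\<lambda>i. w i - P J w i) < s)"
proof -
  have "\<forall>w\<in>W. \<exists>J0. finite J0 \<and> (\<forall>J. finite J \<and> J0 \<subseteq> J \<longrightarrow> N (\<lambda>i. w i - P J w i) < s)"
    using tailZ W s by blast
  then obtain J0 where J0: "\<forall>w\<in>W. finite (J0 w) \<and> (\<forall>J. finite J \<and> J0 w \<subseteq> J \<longrightarrow> N (\<lambda>i. w i - P J w i) < s)"
    by (metis bchoice)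
  define J where "J = insert i0 (\<Union>(J0 ` W))"
  have "finite J" using J0 W(1) by (auto simp: J_def)
  moreover have "\<forall>w\<in>W. N (\<lambda>i. w i - P J w i) < s"
  proof
    fix w assume w: "w \<in> W"
    have "J0 w \<subseteq> J" using w by (auto simp: J_def)
    then show "N (\<lambda>i. w i - P J w i) < s" using J0 w \<open>finite J\<close> by blast
  qed
  ultimately show ?thesis by (auto simp: J_def)
qed

lemma near_max: assumes f: "f \<in> dsphere sc N Z" and e: "e > 0"
  shows "\<exists>x\<in>nball N Z. norm (f x) > 1 - e"
proof -
  have fb: "bdd_functional sc N Z f" and f1: "dnorm N Z f = 1" using f by (auto simp: dsphere_def)
  have "1 - e < (SUP x\<in>nball N Z. norm (f x))" using f1 e by (simp add: dnorm_def)
  then show ?thesis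
    using less_cSUP_iff[of "nball N Z" "\<lambda>x. norm (f x)" "1 - e"] nball0[OF lin_Z] dbdd[OF lin_Z fb]
    by blast
qed

lemma main:
  fixes Ecl :: "('i \<Rightarrow> 'a) set \<Rightarrow> bool"
    and F :: "real \<Rightarrow> ('i \<Rightarrow> 'a) set \<Rightarrow> ('i \<Rightarrow> 'a) list \<Rightarrow> (('i \<Rightarrow> 'a) \<Rightarrow> 'k) list
        \<Rightarrow> ('i \<Rightarrow> 'a) list \<Rightarrow> (('i \<Rightarrow> 'a) \<Rightarrow> 'k) list \<Rightarrow> real"
  assumes fin: "\<forall>J. finite J \<and> J \<noteq> {} \<longrightarrow> Ecl (ZJ J)" and tf: "test_family sc N Z Ecl F"
  shows "Ecl Z"
proof (cases "Z = {(\<lambda>i. 0)}")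
  case True
  have "ZJ {undefined} = Z"
  proof
    show "ZJ {undefined} \<subseteq> Z" by (rule ZJ_sub)
    show "Z \<subseteq> ZJ {undefined}" using True by (auto simp: esum_part_def)
  qed
  then show ?thesis using fin[rule_format, of "{undefined}"] by simp
next
  case False
  have ZU: "Z \<in> nz_subspaces sc N Z" by (rule Z_nz[OF False])
  note T = tf[unfolded test_family_def]
  note T1 = T[THEN conjunct1]
  note T2 = T[THEN conjunct2, THEN conjunct1]
  note T3 = T[THEN conjunct2, THEN conjunct2, THEN conjunct1]
  note T4 = T[THEN conjunct2, THEN conjunct2, THEN conjunct2, THEN conjunct1]
  note T5 = T[THEN conjunct2, THEN conjunct2, THEN conjunct2, THEN conjunct2]
  obtain c where c: "c > 0" and T3c: "\<And>U \<epsilon> xs ys fs gs. U \<in> nz_subspaces sc N Z \<Longrightarrow> \<epsilon> > 0 \<Longrightarrow>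
      xs \<in> lists (nball N U) \<Longrightarrow> ys \<in> lists (nball N U) \<Longrightarrow>
      fs \<in> lists (dball sc N Z) \<Longrightarrow> gs \<in> lists (dball sc N Z) \<Longrightarrow>
      F \<epsilon> Z xs fs ys gs \<le> c * F \<epsilon> U xs (map (restr U) fs) ys (map (restr U) gs)"
    using T3 by blast
  have key: "\<forall>\<epsilon>>0. \<forall>xs\<in>lists (nsphere N Z). \<forall>fs\<in>lists (dsphere sc N Z).
         \<exists>ys\<in>lists (nsphere N Z). \<exists>gs\<in>lists (dsphere sc N Z). F \<epsilon> Z xs fs ys gs \<le> \<epsilon>"
  proof (intro allI impI ballI)
    fix \<epsilon> :: real and xs fs
    assume ep: "\<epsilon> > 0" and xs: "xs \<in> lists (nsphere N Z)" and fs: "fs \<in> lists (dsphere sc N Z)"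
    define n where "n = length xs"
    define m where "m = length fs"
    have xsb: "xs \<in> lists_n (nball N Z) n" using xs by (auto simp: lists_n_def n_def nsphere_def nball_def)
    have fsb: "fs \<in> lists (dball sc N Z)" using fs by (auto simp: dsphere_def dball_def)
    have tau: "\<epsilon> / 3 > 0" using ep by simp
    obtain \<delta> where dp: "\<delta> > 0" and D: "\<forall>ys\<in>lists (nball N Z). \<forall>gs\<in>lists (dball sc N Z). \<forall>zs\<in>lists_n (nball N Z) n.
        (\<forall>k<n. N (\<lambda>i. (xs!k) i - (zs!k) i) \<le> \<delta>) \<longrightarrow>
        \<bar>F \<epsilon> Z xs fs ys gs - F \<epsilon> Z zs fs ys gs\<bar> \<le> \<epsilon> / 3"
      using T4[rule_format, OF ep tau fsb xsb] by blast
    have eta: "\<epsilon> / (3 * c) > 0" using ep c by simp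
    obtain \<theta> where thp: "\<theta> > 0" and V: "\<forall>U\<in>nz_subspaces sc N Z.
      \<forall>xs\<in>lists_n (nball N U) n. \<forall>ys\<in>lists (nball N U). \<forall>gs\<in>lists (dball sc N U).
      \<forall>fs\<in>lists_n (dball sc N U) m. \<forall>hs\<in>lists_n (dball sc N U) m.
        (\<forall>k<m. dnorm N U (\<lambda>v. (fs!k) v - (hs!k) v) \<le> \<theta>) \<longrightarrow>
        \<bar>F \<epsilon> U xs fs ys gs - F \<epsilon> U xs hs ys gs\<bar> \<le> \<epsilon> / (3 * c)"
      using T5[rule_format, where n=n and m=m, OF ep eta] by blast
    define \<epsilon>' where "\<epsilon>' = \<epsilon> / (3 * c + 3)"
    have den: "3 * c + 3 > 0" "1 < 3 * c + 3" using c by auto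
    have ep': "\<epsilon>' > 0" "\<epsilon>' < \<epsilon>" "c * \<epsilon>' \<le> \<epsilon> / 3"
    proof -
      show "\<epsilon>' > 0" using ep den unfolding \<epsilon>'_def by simp
      show "\<epsilon>' < \<epsilon>" using ep den unfolding \<epsilon>'_def by (simp add: divide_less_eq)
      have "c * \<epsilon> * 3 \<le> \<epsilon> * (3 * c + 3)" using ep c by (simp add: algebra_simps)
      then show "c * \<epsilon>' \<le> \<epsilon> / 3" using den unfolding \<epsilon>'_def by (simp add: field_simps)
    qed
    define t where "t = min (\<delta> / 2) (1 / 4)"
    define \<theta>' where "\<theta>' = min \<theta> (1 / 2)"
    define s where "s = min t (\<theta>' / 2)"
    have tp: "t > 0" "t < 1" "2 * t \<le> \<delta>" using dp by (auto simp: t_def)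
    have thp': "\<theta>' > 0" "\<theta>' \<le> \<theta>" "\<theta>' \<le> 1/2" using thp by (auto simp: \<theta>'_def)
    have sp: "s > 0" "s \<le> t" "s \<le> \<theta>' / 2" using tp thp' by (auto simp: s_def)
    have "\<forall>f\<in>set fs. \<exists>x\<in>nball N Z. norm (f x) > 1 - \<theta>' / 2"
      using near_max fs thp' by (auto simp: in_lists_conv_set)
    then obtain xf where xf: "\<forall>f\<in>set fs. xf f \<in> nball N Z \<and> norm (f (xf f)) > 1 - \<theta>' / 2"
      by (metis bchoice)
    obtain z0 where z0: "z0 \<in> Z" "z0 \<noteq> (\<lambda>i. 0)" using False Z0 by blast
    then obtain i0 where i0: "z0 i0 \<noteq> 0" by (metis ext)
    define W where "W = set xs \<union> xf ` set fs"
    have W: "finite W" "W \<subseteq> Z" using xs xf by (auto simp: W_def nsphere_def nball_def in_lists_conv_set)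
    obtain J where J: "finite J" "i0 \<in> J" and JW: "\<forall>w\<in>W. N (\<lambda>i. w i - P J w i) < s"
      using choose_J[OF W sp(1)] by blast
    have ZJne: "ZJ J \<noteq> {(\<lambda>i. 0)}"
    proof
      assume h: "ZJ J = {(\<lambda>i. 0)}"
      have "P J z0 \<in> ZJ J" using P_Z[OF z0(1)] by blast
      then have "P J z0 i0 = 0" using h by auto
      then show False using i0 J(2) by (simp add: P_def)
    qed
    have UJ: "ZJ J \<in> nz_subspaces sc N Z" by (rule ZJ_nz[OF ZJne])
    have EJ: "Ecl (ZJ J)" using fin J by blast
    define zf where "zf x = vsc sc (of_real (1 / N (P J x))) (P J x)" for x
    define hf where "hf (f :: ('i \<Rightarrow> 'a) \<Rightarrow> 'k) = (\<lambda>v. of_real (1 / dnorm N (ZJ J) (restr (ZJ J) f)) * restr (ZJ J) f v)" for f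
    define zs where "zs = map zf xs"
    define hs where "hs = map hf fs"
    have zx: "zf x \<in> nsphere N (ZJ J) \<and> N (\<lambda>i. x i - zf x i) \<le> \<delta>" if x: "x \<in> set xs" for x
    proof -
      have xn: "x \<in> nsphere N Z" using xs x by (auto simp: in_lists_conv_set)
      have "N (\<lambda>i. x i - P J x i) < s" using JW x by (auto simp: W_def)
      then have "N (\<lambda>i. x i - P J x i) \<le> t" using sp(2) by linarith
      from normalize_vec[OF xn this tp(2)] tp(3) show ?thesis by (auto simp: zf_def)
    qed
    have hx: "restr (ZJ J) f \<in> dball sc N (ZJ J) \<and> hf f \<in> dsphere sc N (ZJ J) \<and>
        dnorm N (ZJ J) (\<lambda>v. restr (ZJ J) f v - hf f v) \<le> \<theta>" if f: "f \<in> set fs" for f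
    proof -
      have fd: "f \<in> dball sc N Z" using fsb f by (auto simp: in_lists_conv_set)
      have rf: "restr (ZJ J) f \<in> dball sc N (ZJ J)" by (rule restr_dball[OF lin_ZJ fd])
      define d where "d = dnorm N (ZJ J) (restr (ZJ J) f)"
      have "norm (f (xf f)) - N (\<lambda>i. xf f i - P J (xf f) i) \<le> d"
        unfolding d_def using restr_lower[OF fd] xf f by blast
      moreover have "N (\<lambda>i. xf f i - P J (xf f) i) < s" using JW f by (auto simp: W_def)
      ultimately have dge: "d > 1 - \<theta>'" using xf f sp by force
      then have dpos: "d > 0" using thp' by simp
      have "hf f \<in> dsphere sc N (ZJ J)" using normalize_fun(1)[OF rf] dpos by (simp add: hf_def d_def)
      moreover have "dnorm N (ZJ J) (\<lambda>v. restr (ZJ J) f v - hf f v) = 1 - d"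
        using normalize_fun(2)[OF rf] dpos by (simp add: hf_def d_def)
      ultimately show ?thesis using rf dge thp' by simp
    qed
    have zsJ: "zs \<in> lists (nsphere N (ZJ J))" using zx by (auto simp: zs_def)
    have hsJ: "hs \<in> lists (dsphere sc N (ZJ J))" using hx by (auto simp: hs_def)
    obtain ys gs where ys: "ys \<in> lists (nsphere N (ZJ J))" and gs: "gs \<in> lists (dsphere sc N (ZJ J))"
      and Fe: "F \<epsilon>' (ZJ J) zs hs ys gs \<le> \<epsilon>'"
      using bspec[OF T1 UJ] EJ ep'(1) zsJ hsJ by blast
    define gs' where "gs' = map (ext J) gs"
    have ysZ: "ys \<in> lists (nsphere N Z)" using ys ZJ_sub by (auto simp: nsphere_def)
    have ysbZ: "ys \<in> lists (nball N Z)" using ysZ by (auto simp: nsphere_def nball_def)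
    have ysbJ: "ys \<in> lists (nball N (ZJ J))" using ys by (auto simp: nsphere_def nball_def)
    have gs'Z: "gs' \<in> lists (dsphere sc N Z)" using gs ext_props(1) by (auto simp: gs'_def)
    have gs'b: "gs' \<in> lists (dball sc N Z)" using gs'Z by (auto simp: dsphere_def dball_def)
    have gsb: "gs \<in> lists (dball sc N (ZJ J))" using gs by (auto simp: dsphere_def dball_def)
    have rgs: "map (restr (ZJ J)) gs' = gs"
      unfolding gs'_def map_map by (rule map_idI) (use gs ext_props(2) in \<open>auto simp: in_lists_conv_set\<close>)
    have zsbJ: "zs \<in> lists (nball N (ZJ J))" using zsJ by (auto simp: nsphere_def nball_def)
    have zsnJ: "zs \<in> lists_n (nball N (ZJ J)) n" using zsbJ by (simp add: lists_n_def zs_def n_def)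
    have zsnZ: "zs \<in> lists_n (nball N Z) n" using zsnJ ZJ_sub by (auto simp: lists_n_def nball_def)
    have hsn: "hs \<in> lists_n (dball sc N (ZJ J)) m" using hsJ by (auto simp: lists_n_def hs_def m_def dsphere_def dball_def)
    have hsb: "hs \<in> lists (dball sc N (ZJ J))" using hsn by (simp add: lists_n_def)
    have rfn: "map (restr (ZJ J)) fs \<in> lists_n (dball sc N (ZJ J)) m" using hx by (auto simp: lists_n_def m_def)
    have close_x: "\<forall>k<n. N (\<lambda>i. (xs!k) i - (zs!k) i) \<le> \<delta>"
      using zx by (auto simp: zs_def n_def)
    have close_f: "\<forall>k<m. dnorm N (ZJ J) (\<lambda>v. (map (restr (ZJ J)) fs ! k) v - (hs!k) v) \<le> \<theta>"
      using hx by (auto simp: hs_def m_def)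
    have a: "\<bar>F \<epsilon> Z xs fs ys gs' - F \<epsilon> Z zs fs ys gs'\<bar> \<le> \<epsilon> / 3"
      using D ysbZ gs'b zsnZ close_x by blast
    have b: "F \<epsilon> Z zs fs ys gs' \<le> c * F \<epsilon> (ZJ J) zs (map (restr (ZJ J)) fs) ys gs"
      using T3c[OF UJ ep zsbJ ysbJ fsb gs'b] rgs by simp
    have cc: "\<bar>F \<epsilon> (ZJ J) zs (map (restr (ZJ J)) fs) ys gs - F \<epsilon> (ZJ J) zs hs ys gs\<bar> \<le> \<epsilon> / (3 * c)"
      using V UJ zsnJ ysbJ gsb rfn hsn close_f by blast
    have d: "F \<epsilon> (ZJ J) zs hs ys gs \<le> F \<epsilon>' (ZJ J) zs hs ys gs"
      using T2 UJ ep' zsbJ hsb ysbJ gsb by blast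
    have "F \<epsilon> (ZJ J) zs (map (restr (ZJ J)) fs) ys gs \<le> \<epsilon> / (3 * c) + \<epsilon>'"
      using cc d Fe by linarith
    then have "c * F \<epsilon> (ZJ J) zs (map (restr (ZJ J)) fs) ys gs \<le> c * (\<epsilon> / (3 * c) + \<epsilon>')"
      using c by (intro mult_left_mono) auto
    also have "\<dots> = \<epsilon> / 3 + c * \<epsilon>'" using c by (simp add: field_simps)
    finally have "F \<epsilon> Z xs fs ys gs' \<le> \<epsilon>" using a b ep'(3) by linarith
    then show "\<exists>ys\<in>lists (nsphere N Z). \<exists>gs\<in>lists (dsphere sc N Z). F \<epsilon> Z xs fs ys gs \<le> \<epsilon>"
      using ysZ gs'Z by blast
  qed
  show ?thesis using bspec[OF T1 ZU] key by blast
qed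

end


lemma real_case:
  fixes X :: "'i \<Rightarrow> 'a::banach set"
    and F :: "real \<Rightarrow> ('i \<Rightarrow> 'a) set \<Rightarrow> ('i \<Rightarrow> 'a) list \<Rightarrow> (('i \<Rightarrow> 'a) \<Rightarrow> real) list
               \<Rightarrow> ('i \<Rightarrow> 'a) list \<Rightarrow> (('i \<Rightarrow> 'a) \<Rightarrow> real) list \<Rightarrow> real"
  assumes h: "prop34_hyps scaleR X E nE Ecl F"
  shows "Ecl (esum X E)"
proof -
  interpret zsp E nE scaleR X
    by unfold_locales (use h in \<open>auto simp: prop34_hyps_def scaleR_right_distrib\<close>)
  show ?thesis by (rule main) (use h in \<open>auto simp: prop34_hyps_def\<close>)
qed

lemma complex_case:
  fixes X :: "'i \<Rightarrow> 'a::banach set" and sc :: "complex \<Rightarrow> 'a \<Rightarrow> 'a"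
    and F :: "real \<Rightarrow> ('i \<Rightarrow> 'a) set \<Rightarrow> ('i \<Rightarrow> 'a) list \<Rightarrow> (('i \<Rightarrow> 'a) \<Rightarrow> complex) list
               \<Rightarrow> ('i \<Rightarrow> 'a) list \<Rightarrow> (('i \<Rightarrow> 'a) \<Rightarrow> complex) list \<Rightarrow> real"
  assumes cs: "complex_structure sc" and h: "prop34_hyps sc X E nE Ecl F"
  shows "Ecl (esum X E)"
proof -
  interpret zsp E nE sc X
    by unfold_locales (use h cs in \<open>auto simp: prop34_hyps_def complex_structure_def\<close>)
  show ?thesis by (rule main) (use h in \<open>auto simp: prop34_hyps_def\<close>)
qed


theorem proposition3p4:
  fixes X1 :: "'i \<Rightarrow> 'a::banach set"
    and E1 :: "('i \<Rightarrow> real) set" and nE1 :: "('i \<Rightarrow> real) \<Rightarrow> real"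
    and Ecl1 :: "('i \<Rightarrow> 'a) set \<Rightarrow> bool"
    and F1 :: "real \<Rightarrow> ('i \<Rightarrow> 'a) set \<Rightarrow> ('i \<Rightarrow> 'a) list \<Rightarrow> (('i \<Rightarrow> 'a) \<Rightarrow> real) list
               \<Rightarrow> ('i \<Rightarrow> 'a) list \<Rightarrow> (('i \<Rightarrow> 'a) \<Rightarrow> real) list \<Rightarrow> real"
    and sc :: "complex \<Rightarrow> 'b::banach \<Rightarrow> 'b"
    and X2 :: "'j \<Rightarrow> 'b set"
    and E2 :: "('j \<Rightarrow> real) set" and nE2 :: "('j \<Rightarrow> real) \<Rightarrow> real"
    and Ecl2 :: "('j \<Rightarrow> 'b) set \<Rightarrow> bool"
    and F2 :: "real \<Rightarrow> ('j \<Rightarrow> 'b) set \<Rightarrow> ('j \<Rightarrow> 'b) list \<Rightarrow> (('j \<Rightarrow> 'b) \<Rightarrow> complex) list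
               \<Rightarrow> ('j \<Rightarrow> 'b) list \<Rightarrow> (('j \<Rightarrow> 'b) \<Rightarrow> complex) list \<Rightarrow> real"
  shows "(prop34_hyps scaleR X1 E1 nE1 Ecl1 F1 \<longrightarrow> Ecl1 (esum X1 E1)) \<and>
         (complex_structure sc \<and> prop34_hyps sc X2 E2 nE2 Ecl2 F2 \<longrightarrow> Ecl2 (esum X2 E2))"
  using real_case complex_case by blast

end
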